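(* Let $K\ge 2$, $r\in[0,1]^K$ with $r(1)>r(2)>\cdots>r(K)$, and fix $j\in\{2,\ldots,K\}$. There exists $\bar\varepsilon>0$ such that the following holds. Let $\mathcal{S}_{\bar\varepsilon}:=\{\pi:\ 0<1-\pi(j)<\bar\varepsilon,\ \pi(1)\ge (1-\pi(j))/K\}$, and let $\pi_t=\pi_{\theta(t)}$ be the trajectory of the EG flow started at $\pi_0\in\mathcal{S}_{\bar\varepsilon}$. Write $\varepsilon_0:=1-\pi_0(j)$. Let $\mathcal{W}:=\{\pi:\pi(1)/\pi(j)\ge 1\}$, let $\tau_{\mathcal W}$ be the first time the trajectory enters $\mathcal W$, and let $\tau_{\mathrm{exit}}$ be the first time it leaves $\mathcal{S}_{\bar\varepsilon}$. Then \[ \tau_{\mathcal W}\wedge\tau_{\mathrm{exit}}\;\le\;\frac{4K}{\Delta_{1j}\,\varepsilon_0}\log\!\left(\frac{\pi_0(j)}{\pi_0(1)}\right). \]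
   Context: $K$-armed bandit with softmax policy $\pi_\theta(a)=e^{\theta(a)}/\sum_{a'}e^{\theta(a')}$, $\theta\in\mathbb{R}^K$. Advantage $U(a):=r(a)-\pi_\theta^\top r$; $\Delta_{ab}:=r(a)-r(b)$. The EG (enlightened gradient) flow is the continuous-time ODE $\dot\theta(a)=\sum_{a'=1}^K \mathbf{1}\{U(a')>0\}\,\pi(a')\,U(a')\,(\mathbf{1}\{a=a'\}-\pi(a))$. The constant $\bar\varepsilon$ is one for which, on $\mathcal{S}_{\bar\varepsilon}$, $\frac{d}{dt}\log(\pi(1)/\pi(j))\ge \frac{\Delta_{1j}}{4K}(1-\pi(j))$ and $\frac{d}{dt}(1-\pi(j))>0$ along the EG flow. *)

theory Defs
  imports Complex_Main "HOL-Library.Extended_Real"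
begin

text \<open>Arms are indexed by 1..K; parameters and policies are functions nat => real,
  only their values on {1..K} matter.\<close>

definition softmax :: "nat \<Rightarrow> (nat \<Rightarrow> real) \<Rightarrow> nat \<Rightarrow> real" where
  "softmax K \<theta> a = exp (\<theta> a) / (\<Sum>b\<in>{1..K}. exp (\<theta> b))"

definition adv :: "nat \<Rightarrow> (nat \<Rightarrow> real) \<Rightarrow> (nat \<Rightarrow> real) \<Rightarrow> nat \<Rightarrow> real" where
  "adv K r \<theta> a = r a - (\<Sum>b\<in>{1..K}. softmax K \<theta> b * r b)"

definition eg_field :: "nat \<Rightarrow> (nat \<Rightarrow> real) \<Rightarrow> (nat \<Rightarrow> real) \<Rightarrow> nat \<Rightarrow> real" where
  "eg_field K r \<theta> a =
     (\<Sum>a'\<in>{1..K}. (if adv K r \<theta> a' > 0 then 1 else 0) * softmax K \<theta> a' * adv K r \<theta> a'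
                     * ((if a = a' then 1 else 0) - softmax K \<theta> a))"

definition eg_trajectory :: "nat \<Rightarrow> (nat \<Rightarrow> real) \<Rightarrow> (real \<Rightarrow> nat \<Rightarrow> real) \<Rightarrow> bool" where
  "eg_trajectory K r \<theta> \<longleftrightarrow>
     (\<forall>t\<ge>0. \<forall>a\<in>{1..K}.
        ((\<lambda>s. \<theta> s a) has_real_derivative eg_field K r (\<theta> t) a) (at t within {0..}))"

definition S_set :: "nat \<Rightarrow> nat \<Rightarrow> real \<Rightarrow> (nat \<Rightarrow> real) set" where
  "S_set K j eps = {p. 0 < 1 - p j \<and> 1 - p j < eps \<and> p 1 \<ge> (1 - p j) / real K}"

definition W_set :: "nat \<Rightarrow> (nat \<Rightarrow> real) set" where
  "W_set j = {p. p 1 / p j \<ge> 1}"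

text \<open>First (infimum) time t >= 0 at which the policy trajectory lies in A; infinity if never.\<close>
definition hit_time :: "(real \<Rightarrow> nat \<Rightarrow> real) \<Rightarrow> (nat \<Rightarrow> real) set \<Rightarrow> ereal" where
  "hit_time p A = Inf {ereal t | t. 0 \<le> t \<and> p t \<in> A}"

end

theory Submission
  imports Defs
begin

definition cc :: "nat \<Rightarrow> (nat \<Rightarrow> real) \<Rightarrow> (nat \<Rightarrow> real) \<Rightarrow> nat \<Rightarrow> real" where
  "cc K r \<theta> a = (if adv K r \<theta> a > 0 then 1 else 0) * softmax K \<theta> a * adv K r \<theta> a"

lemma softmax_pos: "K \<ge> 1 \<Longrightarrow> softmax K \<theta> a > 0"
  unfolding softmax_def
  by (intro divide_pos_pos) (auto intro!: sum_pos)

lemma softmax_sum: "K \<ge> 1 \<Longrightarrow> (\<Sum>b\<in>{1..K}. softmax K \<theta> b) = 1"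
proof -
  assume "K \<ge> 1"
  have "(\<Sum>b\<in>{1..K}. exp (\<theta> b)) > 0" using \<open>K \<ge> 1\<close> by (auto intro!: sum_pos)
  then show ?thesis unfolding softmax_def by (simp add: sum_divide_distrib[symmetric])
qed

lemma cc_nonneg: "K \<ge> 1 \<Longrightarrow> cc K r \<theta> a \<ge> 0"
  unfolding cc_def using softmax_pos[of K \<theta> a] by auto

lemma eg_field_eq:
  assumes "a \<in> {1..K}"
  shows "eg_field K r \<theta> a = cc K r \<theta> a - softmax K \<theta> a * (\<Sum>b\<in>{1..K}. cc K r \<theta> b)"
proof -
  have "eg_field K r \<theta> a = (\<Sum>a'\<in>{1..K}. cc K r \<theta> a' * (if a = a' then 1 else 0))
       - (\<Sum>a'\<in>{1..K}. cc K r \<theta> a') * softmax K \<theta> a"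
  proof -
    have "eg_field K r \<theta> a = (\<Sum>a'\<in>{1..K}. cc K r \<theta> a' * (if a = a' then 1 else 0)
       - cc K r \<theta> a' * softmax K \<theta> a)"
      unfolding eg_field_def cc_def by (rule sum.cong) (auto simp: algebra_simps)
    then show ?thesis by (simp add: sum_subtractf sum_distrib_right)
  qed
  also have "(\<Sum>a'\<in>{1..K}. cc K r \<theta> a' * (if a = a' then 1 else 0)) = cc K r \<theta> a"
    using assms by (simp add: if_distrib cong: if_cong)
  finally show ?thesis by simp
qed

lemma key:
  fixes K j :: nat and r :: "nat \<Rightarrow> real" and \<theta> :: "nat \<Rightarrow> real"
  assumes K2: "K \<ge> 2"
    and r01: "\<forall>a\<in>{1..K}. 0 \<le> r a \<and> r a \<le> 1"
    and rmono: "\<forall>a b. 1 \<le> a \<and> a < b \<and> b \<le> K \<longrightarrow> r a > r b"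
    and jK: "j \<in> {2..K}"
    and e0: "0 < 1 - softmax K \<theta> j"
    and e1: "1 - softmax K \<theta> j < (r 1 - r j) / (8 * real K)"
    and p1: "softmax K \<theta> 1 \<ge> (1 - softmax K \<theta> j) / real K"
  shows "eg_field K r \<theta> 1 - eg_field K r \<theta> j \<ge> (r 1 - r j) * (1 - softmax K \<theta> j) / (4 * real K)"
    and "(\<Sum>b\<in>{1..K}. softmax K \<theta> b * eg_field K r \<theta> b) - eg_field K r \<theta> j \<ge> 0"
proof -
  define I where "I = {1..K::nat}"
  define p where "p = softmax K \<theta>"
  define \<epsilon> where "\<epsilon> = 1 - p j"
  define \<Delta> where "\<Delta> = r 1 - r j"
  define c where "c = cc K r \<theta>"
  define C where "C = (\<Sum>b\<in>I. c b)"
  define m where "m = (\<Sum>b\<in>I. p b * r b)"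
  have K1: "K \<ge> 1" using K2 by simp
  have Kpos: "real K > 0" using K2 by simp
  have fin: "finite I" by (simp add: I_def)
  have jI: "j \<in> I" and oneI: "1 \<in> I" and j1: "j \<noteq> 1" using jK K2 by (auto simp: I_def)
  have ppos: "\<And>b. p b > 0" unfolding p_def using softmax_pos[OF K1] by blast
  have psum: "(\<Sum>b\<in>I. p b) = 1" unfolding p_def I_def using softmax_sum[OF K1] by blast
  have cnn: "\<And>b. c b \<ge> 0" unfolding c_def using cc_nonneg[OF K1] by blast
  have Dpos: "\<Delta> > 0" using rmono jK unfolding \<Delta>_def by auto
  have "r 1 \<le> 1" "0 \<le> r j" using r01 jK K2 by auto
  hence Dle: "\<Delta> \<le> 1" unfolding \<Delta>_def by simp
  have epos: "\<epsilon> > 0" and ele: "\<epsilon> < \<Delta> / (8 * real K)" and p1e: "p 1 \<ge> \<epsilon> / real K"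
    using e0 e1 p1 by (auto simp: \<epsilon>_def p_def \<Delta>_def)
  have "\<Delta> / (8 * real K) \<le> 1 / 16"
  proof -
    have "\<Delta> / (8 * real K) \<le> 1 / (8 * real K)" using Dle Kpos by (simp add: divide_right_mono)
    also have "\<dots> \<le> 1 / 16" using K2 by (simp add: field_simps)
    finally show ?thesis .
  qed
  hence esmall: "\<epsilon> \<le> 1/16" using ele by linarith
  have rest: "(\<Sum>b\<in>I-{j}. p b) = \<epsilon>"
    using psum sum.remove[OF fin jI, of p] unfolding \<epsilon>_def by simp
  have p1le: "p 1 \<le> \<epsilon>"
  proof -
    have "p 1 \<le> (\<Sum>b\<in>I-{j}. p b)"
      using oneI j1 fin by (intro member_le_sum) (auto intro: less_imp_le ppos)
    thus ?thesis using rest by simp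
  qed
  have pble: "\<And>b. b \<in> I - {j} \<Longrightarrow> p b \<le> \<epsilon>"
  proof -
    fix b assume "b \<in> I - {j}"
    hence "p b \<le> (\<Sum>b\<in>I-{j}. p b)"
      using fin by (intro member_le_sum) (auto intro: less_imp_le ppos)
    thus "p b \<le> \<epsilon>" using rest by simp
  qed
  have advU: "\<And>a. adv K r \<theta> a = (\<Sum>b\<in>I. p b * (r a - r b))"
  proof -
    fix a
    have "(\<Sum>b\<in>I. p b * (r a - r b)) = (\<Sum>b\<in>I. p b) * r a - m"
      by (simp add: m_def right_diff_distrib sum_subtractf sum_distrib_right[symmetric])
    thus "adv K r \<theta> a = (\<Sum>b\<in>I. p b * (r a - r b))"
      using psum by (simp add: adv_def m_def p_def I_def)
  qed
  have r1ge: "\<And>b. b \<in> I \<Longrightarrow> r 1 \<ge> r b"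
    using rmono unfolding I_def by (metis atLeastAtMost_iff le_less order_refl)
  have U1: "adv K r \<theta> 1 \<ge> p j * \<Delta>"
  proof -
    have "p j * \<Delta> \<le> (\<Sum>b\<in>I. p b * (r 1 - r b))"
      unfolding \<Delta>_def using jI fin r1ge ppos
      by (intro member_le_sum[where f="\<lambda>b. p b * (r 1 - r b)"]) (auto intro!: mult_nonneg_nonneg simp: ppos[THEN less_imp_le])
    thus ?thesis using advU by simp
  qed
  have pj: "p j = 1 - \<epsilon>" by (simp add: \<epsilon>_def)
  have c1: "c 1 \<ge> (\<epsilon> / real K) * (1 - \<epsilon>) * \<Delta>"
  proof -
    have "p j * \<Delta> > 0" using pj esmall Dpos by simp
    hence "adv K r \<theta> 1 > 0" using U1 by linarith
    hence "c 1 = p 1 * adv K r \<theta> 1" by (simp add: c_def cc_def p_def)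
    also have "\<dots> \<ge> (\<epsilon> / real K) * ((1 - \<epsilon>) * \<Delta>)"
      using p1e U1 pj epos Kpos esmall Dpos ppos[of 1] by (intro mult_mono) auto
    finally show ?thesis by simp
  qed
  have cj: "c j \<le> \<epsilon>"
  proof -
    have "adv K r \<theta> j = (\<Sum>b\<in>I-{j}. p b * (r j - r b))"
      using advU[of j] sum.remove[OF fin jI, of "\<lambda>b. p b * (r j - r b)"] by simp
    also have "\<dots> \<le> (\<Sum>b\<in>I-{j}. p b)"
    proof (rule sum_mono)
      fix b assume "b \<in> I - {j}"
      hence "b \<in> {1..K}" unfolding I_def by blast
      hence "0 \<le> r b" "r j \<le> 1" using r01 jI unfolding I_def by auto
      hence "r j - r b \<le> 1" by simp
      thus "p b * (r j - r b) \<le> p b" using ppos[of b] by (simp add: mult_left_le)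
    qed
    finally have "adv K r \<theta> j \<le> \<epsilon>" using rest by simp
    moreover have "p j \<le> 1" using pj epos by simp
    ultimately have "p j * adv K r \<theta> j \<le> \<epsilon>" if "adv K r \<theta> j > 0"
      using that ppos[of j] by (meson less_imp_le mult_left_le_one_le order_trans)
    thus ?thesis unfolding c_def cc_def p_def[symmetric] using epos by auto
  qed
  have Cge: "C \<ge> c 1 + c j"
  proof -
    have "C = c j + (\<Sum>b\<in>I-{j}. c b)" unfolding C_def using sum.remove[OF fin jI] by simp
    moreover have "c 1 \<le> (\<Sum>b\<in>I-{j}. c b)" using fin oneI j1 cnn by (intro member_le_sum) auto
    ultimately show ?thesis by simp
  qed
  have g: "\<And>a. a \<in> I \<Longrightarrow> eg_field K r \<theta> a = c a - p a * C"
    unfolding c_def p_def C_def I_def by (rule eg_field_eq) (simp add: I_def)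
  have "eg_field K r \<theta> 1 - eg_field K r \<theta> j = c 1 - c j + (p j - p 1) * C"
    using g[OF oneI] g[OF jI] by (simp add: algebra_simps)
  also have "\<dots> \<ge> c 1 - c j + (p j - p 1) * (c 1 + c j)"
    using Cge pj p1le esmall by (intro add_left_mono mult_left_mono) auto
  finally have A: "eg_field K r \<theta> 1 - eg_field K r \<theta> j \<ge> c 1 * (1 + p j - p 1) - c j * (1 - p j + p 1)"
    by (simp add: algebra_simps)
  have A1: "c 1 * (1 + p j - p 1) \<ge> c 1" using cnn[of 1] pj p1le esmall
    by (simp add: mult_le_cancel_left1)
  have A2: "c j * (1 - p j + p 1) \<le> c j * (2 * \<epsilon>)" using cnn[of j] pj p1le
    by (intro mult_left_mono) auto
  have A3: "c j * (2 * \<epsilon>) \<le> \<epsilon> * (2 * \<epsilon>)" using cj epos by (intro mult_right_mono) auto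
  have A4: "\<epsilon> * (2 * \<epsilon>) \<le> \<epsilon> * (2 * (\<Delta> / (8 * real K)))" using ele epos by (intro mult_left_mono) auto
  have A5: "(\<epsilon> / real K) * (1 - \<epsilon>) * \<Delta> - \<epsilon> * (2 * (\<Delta> / (8 * real K))) \<ge> \<Delta> * \<epsilon> / (4 * real K)"
  proof -
    have "(\<epsilon> / real K) * (1 - \<epsilon>) * \<Delta> - \<epsilon> * (2 * (\<Delta> / (8 * real K))) - \<Delta> * \<epsilon> / (4 * real K)
       = (\<epsilon> * \<Delta> / real K) * (1/2 - \<epsilon>)" using Kpos by (simp add: field_simps)
    also have "\<dots> \<ge> 0" using epos Dpos Kpos esmall by (intro mult_nonneg_nonneg) auto
    finally show ?thesis by (metis diff_ge_0_iff_ge)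
  qed
  show "eg_field K r \<theta> 1 - eg_field K r \<theta> j \<ge> (r 1 - r j) * (1 - softmax K \<theta> j) / (4 * real K)"
    using A A1 A2 A3 A4 A5 c1 unfolding \<Delta>_def[symmetric] p_def[symmetric] \<epsilon>_def[symmetric] by linarith
  have sq: "(\<Sum>b\<in>I. p b * p b) \<le> p j * p j + \<epsilon> * \<epsilon>"
  proof -
    have "(\<Sum>b\<in>I. p b * p b) = p j * p j + (\<Sum>b\<in>I-{j}. p b * p b)" using sum.remove[OF fin jI] by simp
    also have "(\<Sum>b\<in>I-{j}. p b * p b) \<le> (\<Sum>b\<in>I-{j}. p b * \<epsilon>)"
      using pble ppos by (intro sum_mono mult_left_mono) (auto intro: less_imp_le)
    also have "\<dots> = \<epsilon> * \<epsilon>" using rest by (simp add: sum_distrib_right[symmetric])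
    finally show ?thesis by simp
  qed
  have pc: "(\<Sum>b\<in>I. p b * c b) \<ge> p j * c j"
    using fin jI ppos cnn by (intro member_le_sum[where f="\<lambda>b. p b * c b"]) (auto intro!: mult_nonneg_nonneg simp: ppos[THEN less_imp_le])
  have "(\<Sum>b\<in>I. p b * eg_field K r \<theta> b) = (\<Sum>b\<in>I. p b * c b - C * (p b * p b))"
    by (intro sum.cong) (auto simp: g algebra_simps)
  also have "\<dots> = (\<Sum>b\<in>I. p b * c b) - C * (\<Sum>b\<in>I. p b * p b)"
    by (simp add: sum_subtractf sum_distrib_left)
  finally have B0: "(\<Sum>b\<in>I. p b * eg_field K r \<theta> b) - eg_field K r \<theta> j
      = (\<Sum>b\<in>I. p b * c b) - c j + C * (p j - (\<Sum>b\<in>I. p b * p b))"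
    using g[OF jI] by (simp add: algebra_simps)
  have B1: "p j - (\<Sum>b\<in>I. p b * p b) \<ge> \<epsilon> * (1 - 2 * \<epsilon>)" using sq pj by (simp add: algebra_simps)
  have B2: "\<epsilon> * (1 - 2 * \<epsilon>) \<ge> 0" using epos esmall by simp
  have B3: "C * (p j - (\<Sum>b\<in>I. p b * p b)) \<ge> (c 1 + c j) * (\<epsilon> * (1 - 2 * \<epsilon>))"
    using Cge B1 B2 cnn[of 1] cnn[of j] by (intro mult_mono) auto
  have B4: "(1 - 2 * \<epsilon>) * c 1 \<ge> 2 * \<epsilon> * c j"
  proof -
    have "2 * \<epsilon> * c j \<le> 2 * \<epsilon> * \<epsilon>" using cj epos by simp
    also have "\<dots> \<le> 2 * \<epsilon> * (\<Delta> / (8 * real K))" using ele epos by (intro mult_left_mono) auto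
    also have "\<dots> \<le> (1 - 2 * \<epsilon>) * ((\<epsilon> / real K) * (1 - \<epsilon>) * \<Delta>)"
    proof -
      have "(1 - 2 * \<epsilon>) * ((\<epsilon> / real K) * (1 - \<epsilon>) * \<Delta>) - 2 * \<epsilon> * (\<Delta> / (8 * real K))
          = (\<epsilon> * \<Delta> / real K) * ((1 - 2 * \<epsilon>) * (1 - \<epsilon>) - 1/4)" using Kpos by (simp add: field_simps)
      also have "\<dots> \<ge> 0"
      proof -
        have "(1 - 2 * \<epsilon>) * (1 - \<epsilon>) \<ge> (7/8) * (15/16)" using esmall epos by (intro mult_mono) auto
        thus ?thesis using epos Dpos Kpos by (intro mult_nonneg_nonneg) auto
      qed
      finally show ?thesis by (metis diff_ge_0_iff_ge)
    qed
    also have "\<dots> \<le> (1 - 2 * \<epsilon>) * c 1" using c1 esmall by (intro mult_left_mono) auto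
    finally show ?thesis .
  qed
  have "(\<Sum>b\<in>I. p b * eg_field K r \<theta> b) - eg_field K r \<theta> j \<ge> \<epsilon> * ((1 - 2 * \<epsilon>) * c 1 - 2 * \<epsilon> * c j)"
    using B0 B3 pc pj by (simp add: algebra_simps)
  moreover have "\<epsilon> * ((1 - 2 * \<epsilon>) * c 1 - 2 * \<epsilon> * c j) \<ge> 0" using B4 epos by simp
  ultimately show "(\<Sum>b\<in>{1..K}. softmax K \<theta> b * eg_field K r \<theta> b) - eg_field K r \<theta> j \<ge> 0"
    unfolding I_def p_def by linarith
qed

lemma incr:
  fixes f f' :: "real \<Rightarrow> real"
  assumes T: "0 \<le> T"
    and d: "\<And>t. 0 \<le> t \<Longrightarrow> (f has_real_derivative f' t) (at t within {0..})"
    and nn: "\<And>t. 0 < t \<Longrightarrow> t < T \<Longrightarrow> f' t \<ge> 0"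
  shows "f 0 \<le> f T"
proof (rule DERIV_nonneg_imp_increasing_open[OF T])
  fix x :: real assume x: "0 < x" "x < T"
  have "(f has_real_derivative f' x) (at x within {0<..})"
    using d[of x] x by (rule_tac DERIV_subset) auto
  hence "(f has_real_derivative f' x) (at x)"
    using x by (subst (asm) at_within_open) auto
  thus "\<exists>y. (f has_real_derivative y) (at x) \<and> 0 \<le> y" using nn x by blast
next
  show "continuous_on {0..T} f"
    unfolding continuous_on_eq_continuous_within
  proof
    fix x assume "x \<in> {0..T}"
    hence "continuous (at x within {0..}) f" using d by (intro DERIV_continuous) auto
    thus "continuous (at x within {0..T}) f" unfolding continuous_within
      by (rule tendsto_within_subset) auto
  qed
qed

lemma h_deriv:
  fixes \<theta> :: "real \<Rightarrow> nat \<Rightarrow> real"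
  assumes K1: "K \<ge> 1"
    and d: "\<And>b. b \<in> {1..K} \<Longrightarrow> ((\<lambda>s. \<theta> s b) has_real_derivative g b) (at t within S)"
    and j: "j \<in> {1..K}"
  shows "((\<lambda>s. ln (\<Sum>b\<in>{1..K}. exp (\<theta> s b)) - \<theta> s j) has_real_derivative
           (\<Sum>b\<in>{1..K}. softmax K (\<theta> t) b * g b) - g j) (at t within S)"
proof -
  define Z where "Z = (\<Sum>b\<in>{1..K}. exp (\<theta> t b))"
  have Zpos: "Z > 0" unfolding Z_def using K1 by (auto intro!: sum_pos)
  have e: "\<And>b. b \<in> {1..K} \<Longrightarrow> ((\<lambda>s. exp (\<theta> s b)) has_real_derivative exp (\<theta> t b) * g b) (at t within S)"
    by (rule DERIV_chain'[where g=exp, OF d]) (auto intro: DERIV_exp)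
  have sd: "((\<lambda>s. \<Sum>b\<in>{1..K}. exp (\<theta> s b)) has_real_derivative (\<Sum>b\<in>{1..K}. exp (\<theta> t b) * g b)) (at t within S)"
    by (rule DERIV_sum) (rule e)
  have ld: "((\<lambda>s. ln (\<Sum>b\<in>{1..K}. exp (\<theta> s b))) has_real_derivative (1 / Z) * (\<Sum>b\<in>{1..K}. exp (\<theta> t b) * g b)) (at t within S)"
    using DERIV_chain'[OF sd DERIV_ln_divide[OF Zpos[unfolded Z_def]]] unfolding Z_def .
  have eq: "(1 / Z) * (\<Sum>b\<in>{1..K}. exp (\<theta> t b) * g b) = (\<Sum>b\<in>{1..K}. softmax K (\<theta> t) b * g b)"
  proof -
    have "(\<Sum>b\<in>{1..K}. softmax K (\<theta> t) b * g b) = (\<Sum>b\<in>{1..K}. (exp (\<theta> t b) * g b) / Z)"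
      unfolding softmax_def Z_def by (intro sum.cong) auto
    also have "\<dots> = (\<Sum>b\<in>{1..K}. exp (\<theta> t b) * g b) / Z"
      by (rule sum_divide_distrib[symmetric])
    finally show ?thesis by simp
  qed
  show ?thesis using DERIV_diff[OF ld d[OF j]] eq by simp
qed

lemma p1_le:
  assumes "K \<ge> 2" "j \<in> {2..K}"
  shows "softmax K \<theta> 1 \<le> 1 - softmax K \<theta> j"
proof -
  have K1: "K \<ge> 1" using assms by simp
  have fin: "finite {1..K}" by simp
  have jI: "j \<in> {1..K}" using assms by auto
  have "(\<Sum>b\<in>{1..K}. softmax K \<theta> b) = softmax K \<theta> j + (\<Sum>b\<in>{1..K}-{j}. softmax K \<theta> b)"
    using sum.remove[OF fin jI] by simp
  moreover have "softmax K \<theta> 1 \<le> (\<Sum>b\<in>{1..K}-{j}. softmax K \<theta> b)"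
    using assms softmax_pos[OF K1] by (intro member_le_sum) (auto intro: less_imp_le)
  ultimately show ?thesis using softmax_sum[OF K1] by simp
qed

lemma ratio:
  assumes "K \<ge> 1"
  shows "softmax K \<theta> a / softmax K \<theta> b = exp (\<theta> a - \<theta> b)"
proof -
  have "(\<Sum>b\<in>{1..K}. exp (\<theta> b)) > 0" using assms by (auto intro!: sum_pos)
  thus ?thesis unfolding softmax_def by (simp add: exp_diff)
qed

lemma hval:
  assumes "K \<ge> 1"
  shows "ln (\<Sum>b\<in>{1..K}. exp (\<theta> b)) - \<theta> j = - ln (softmax K \<theta> j)"
proof -
  have "(\<Sum>b\<in>{1..K}. exp (\<theta> b)) > 0" using assms by (auto intro!: sum_pos)
  thus ?thesis unfolding softmax_def by (simp add: ln_div)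
qed

lemma hit_le:
  assumes "0 \<le> t" "q t \<in> A"
  shows "hit_time q A \<le> ereal t"
  unfolding hit_time_def using assms by (intro Inf_lower) blast

theorem theorem3:
  fixes K j :: nat and r :: "nat \<Rightarrow> real"
  assumes "K \<ge> 2"
    and "\<forall>a\<in>{1..K}. 0 \<le> r a \<and> r a \<le> 1"
    and "\<forall>a b. 1 \<le> a \<and> a < b \<and> b \<le> K \<longrightarrow> r a > r b"
    and "j \<in> {2..K}"
  shows "\<exists>eps>0. \<forall>\<theta>. eg_trajectory K r \<theta> \<and> softmax K (\<theta> 0) \<in> S_set K j eps \<longrightarrow>
           min (hit_time (\<lambda>t. softmax K (\<theta> t)) (W_set j))
               (hit_time (\<lambda>t. softmax K (\<theta> t)) (- S_set K j eps))
           \<le> ereal (4 * real K / ((r 1 - r j) * (1 - softmax K (\<theta> 0) j))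
                     * ln (softmax K (\<theta> 0) j / softmax K (\<theta> 0) 1))"
proof -
  note K2 = assms(1) and r01 = assms(2) and rmono = assms(3) and jK = assms(4)
  define \<Delta> where "\<Delta> = r 1 - r j"
  define eps where "eps = \<Delta> / (8 * real K)"
  have K1: "K \<ge> 1" using K2 by simp
  have Kpos: "real K > 0" using K2 by simp
  have jI: "j \<in> {1..K}" and oneI: "(1::nat) \<in> {1..K}" using jK K2 by auto
  have Dpos: "\<Delta> > 0" using rmono jK unfolding \<Delta>_def by auto
  have "r 1 \<le> 1" "0 \<le> r j" using r01 jK K2 by auto
  hence Dle: "\<Delta> \<le> 1" unfolding \<Delta>_def by simp
  have epspos: "eps > 0" unfolding eps_def using Dpos Kpos by simp
  have "\<Delta> / (8 * real K) \<le> 1 / (8 * real K)" using Dle Kpos by (simp add: divide_right_mono)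
  also have "\<dots> \<le> 1 / 16" using K2 by (simp add: field_simps)
  finally have epssmall: "eps \<le> 1/16" unfolding eps_def .
  show ?thesis
  proof (intro exI[of _ eps] conjI allI impI epspos)
    fix \<theta> :: "real \<Rightarrow> nat \<Rightarrow> real"
    assume H: "eg_trajectory K r \<theta> \<and> softmax K (\<theta> 0) \<in> S_set K j eps"
    define p where "p = (\<lambda>t. softmax K (\<theta> t))"
    define \<epsilon>0 where "\<epsilon>0 = 1 - p 0 j"
    define T where "T = 4 * real K / ((r 1 - r j) * \<epsilon>0) * ln (p 0 j / p 0 1)"
    have der: "\<And>t a. 0 \<le> t \<Longrightarrow> a \<in> {1..K} \<Longrightarrow>
        ((\<lambda>s. \<theta> s a) has_real_derivative eg_field K r (\<theta> t) a) (at t within {0..})"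
      using H unfolding eg_trajectory_def by blast
    have S0: "0 < \<epsilon>0" "\<epsilon>0 < eps" "p 0 1 \<ge> \<epsilon>0 / real K"
      using H unfolding S_set_def \<epsilon>0_def p_def by auto
    have ppos: "\<And>t a. p t a > 0" unfolding p_def using softmax_pos[OF K1] by blast
    have p01: "p 0 1 \<le> \<epsilon>0" unfolding \<epsilon>0_def p_def using p1_le[OF K2 jK] .
    have "p 0 1 < p 0 j" using p01 S0 epssmall unfolding \<epsilon>0_def by linarith
    hence "p 0 j / p 0 1 \<ge> 1" using ppos[of 0 1] by simp
    hence lnpos: "ln (p 0 j / p 0 1) \<ge> 0" by simp
    have Tnn: "T \<ge> 0" unfolding T_def \<Delta>_def[symmetric] using lnpos Dpos S0 Kpos
      by (intro mult_nonneg_nonneg divide_nonneg_pos) auto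
    have goal: "min (hit_time p (W_set j)) (hit_time p (- S_set K j eps)) \<le> ereal T"
    proof (cases "\<exists>t\<in>{0..T}. p t \<notin> S_set K j eps")
      case True
      then obtain t where t: "0 \<le> t" "t \<le> T" "p t \<in> - S_set K j eps" by auto
      have "hit_time p (- S_set K j eps) \<le> ereal t" using hit_le[of t p, OF t(1) t(3)] .
      also have "\<dots> \<le> ereal T" using t by simp
      finally show ?thesis by (simp add: min_le_iff_disj)
    next
      case False
      hence inS: "\<And>t. 0 \<le> t \<Longrightarrow> t \<le> T \<Longrightarrow> p t \<in> S_set K j eps" by auto
      have keyt: "\<And>t. 0 \<le> t \<Longrightarrow> t \<le> T \<Longrightarrow>
          eg_field K r (\<theta> t) 1 - eg_field K r (\<theta> t) j \<ge> (r 1 - r j) * (1 - p t j) / (4 * real K)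
        \<and> (\<Sum>b\<in>{1..K}. p t b * eg_field K r (\<theta> t) b) - eg_field K r (\<theta> t) j \<ge> 0"
      proof -
        fix t assume t: "0 \<le> t" "t \<le> T"
        have "p t \<in> S_set K j eps" using inS[OF t] .
        hence a: "0 < 1 - softmax K (\<theta> t) j" "1 - softmax K (\<theta> t) j < (r 1 - r j) / (8 * real K)"
            "softmax K (\<theta> t) 1 \<ge> (1 - softmax K (\<theta> t) j) / real K"
          unfolding S_set_def p_def eps_def \<Delta>_def by auto
        show "?thesis t" using key[OF K2 r01 rmono jK a] unfolding p_def by blast
      qed
      have epsmono: "\<And>s. 0 \<le> s \<Longrightarrow> s \<le> T \<Longrightarrow> p s j \<le> p 0 j"
      proof -
        fix s assume s: "0 \<le> s" "s \<le> T"
        define h where "h = (\<lambda>t. ln (\<Sum>b\<in>{1..K}. exp (\<theta> t b)) - \<theta> t j)"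
        have "h 0 \<le> h s"
        proof (rule incr[OF s(1)])
          fix t :: real assume "0 \<le> t"
          show "(h has_real_derivative
              (\<Sum>b\<in>{1..K}. softmax K (\<theta> t) b * eg_field K r (\<theta> t) b) - eg_field K r (\<theta> t) j)
              (at t within {0..})"
            unfolding h_def using \<open>0 \<le> t\<close> by (intro h_deriv[OF K1 _ jI] der) auto
        next
          fix t :: real assume "0 < t" "t < s"
          thus "(\<Sum>b\<in>{1..K}. softmax K (\<theta> t) b * eg_field K r (\<theta> t) b) - eg_field K r (\<theta> t) j \<ge> 0"
            using keyt[of t] s unfolding p_def by auto
        qed
        hence "- ln (p 0 j) \<le> - ln (p s j)" unfolding h_def p_def hval[OF K1] .
        hence "ln (p s j) \<le> ln (p 0 j)" by simp
        thus "p s j \<le> p 0 j" using ppos[of s j] ppos[of 0 j] by simp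
      qed
      define k where "k = \<Delta> * \<epsilon>0 / (4 * real K)"
      define D where "D = (\<lambda>t. \<theta> t 1 - \<theta> t j - k * t)"
      have "D 0 \<le> D T"
      proof (rule incr[OF Tnn])
        fix t :: real assume t: "0 \<le> t"
        show "(D has_real_derivative eg_field K r (\<theta> t) 1 - eg_field K r (\<theta> t) j - k) (at t within {0..})"
          unfolding D_def using DERIV_diff[OF DERIV_diff[OF der[OF t oneI] der[OF t jI]] DERIV_cmult_Id[of k]]
          by simp
      next
        fix t :: real assume t: "0 < t" "t < T"
        have "k \<le> \<Delta> * (1 - p t j) / (4 * real K)"
          unfolding k_def \<epsilon>0_def using epsmono[of t] t Dpos Kpos
          by (intro divide_right_mono mult_left_mono) auto
        thus "eg_field K r (\<theta> t) 1 - eg_field K r (\<theta> t) j - k \<ge> 0"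
          using keyt[of t] t unfolding \<Delta>_def by auto
      qed
      moreover have "k * T = \<theta> 0 j - \<theta> 0 1"
      proof -
        have "k * T = ln (p 0 j / p 0 1)"
          unfolding k_def T_def \<Delta>_def[symmetric] using Dpos S0 Kpos by (simp add: field_simps)
        also have "\<dots> = \<theta> 0 j - \<theta> 0 1" unfolding p_def ratio[OF K1] by simp
        finally show ?thesis .
      qed
      ultimately have "\<theta> T 1 - \<theta> T j \<ge> 0" unfolding D_def by simp
      hence "p T 1 / p T j \<ge> 1" unfolding p_def ratio[OF K1] by simp
      hence "p T \<in> W_set j" unfolding W_set_def by simp
      hence "hit_time p (W_set j) \<le> ereal T" using hit_le[of T p, OF Tnn] by blast
      thus ?thesis by (simp add: min_le_iff_disj)
    qed
    show "min (hit_time (\<lambda>t. softmax K (\<theta> t)) (W_set j))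
               (hit_time (\<lambda>t. softmax K (\<theta> t)) (- S_set K j eps))
           \<le> ereal (4 * real K / ((r 1 - r j) * (1 - softmax K (\<theta> 0) j))
                     * ln (softmax K (\<theta> 0) j / softmax K (\<theta> 0) 1))"
      using goal unfolding T_def \<epsilon>0_def p_def .
  qed
qed

end
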